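(* Let $\Omega\subseteq\mathbb{R}^{m\times m}$, let $d:\Omega^2\to\mathbb{R}$ be a pseudometric, let $n\ge2$ and let $d_F:\Omega^n\to\mathbb{R}$, $d_F(A_1,\dots,A_n)=\min_{B\in\Omega}\sum_{i=1}^n d(A_i,B)$, be the Fermat distance function induced by $d$. Let $\Omega'=\Omega/\!\sim_d$, where $A\sim_d B$ iff $d(A,B)=0$, and write $[A]$ for the equivalence class of $A$. Let $d'_F:\Omega'^n\to\mathbb{R}$ be given by $d'_F([A_1],\dots,[A_n])=d_F(A_1,\dots,A_n)$. Then $d'_F$ is an $n$-metric on $\Omega'$.
   Context: A pseudometric on $\Omega$ is a map $d$ with $d(A,B)\ge0$, $d(A,A)=0$, $d(A,B)=d(B,A)$, $d(A,C)\le d(A,B)+d(B,C)$; $\sim_d$ is then an equivalence relation. For a set $X$, a map $D:X^n\to\mathbb{R}$ is an $n$-metric if for all $x_1,\dots,x_{n+1}\in X$ and all permutations $\sigma$ of $[n]$: $D(x_{1:n})\ge0$; $D(x_{1:n})=0$ iff $x_1=\dots=x_n$; $D(x_{1:n})=D(x_{\sigma(1:n)})$; and $D(x_{1:n})\le\sum_{i=1}^n D(x^i_{1:n,n+1})$, where $x_{1:n}=(x_1,\dots,x_n)$, $x_{\sigma(1:n)}$ has $i$-th entry $x_{\sigma(i)}$, and $x^i_{1:n,n+1}$ is $x_{1:n}$ with $x_i$ replaced by $x_{n+1}$. *)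

theory Defs
  imports "HOL-Analysis.Analysis" "HOL-Combinatorics.Permutations"
begin

definition pseudometric_on :: "(real^'m^'m) set \<Rightarrow> (real^'m^'m \<Rightarrow> real^'m^'m \<Rightarrow> real) \<Rightarrow> bool" where
  "pseudometric_on \<Omega> d \<longleftrightarrow>
     (\<forall>A\<in>\<Omega>. \<forall>B\<in>\<Omega>. d A B \<ge> 0) \<and>
     (\<forall>A\<in>\<Omega>. d A A = 0) \<and>
     (\<forall>A\<in>\<Omega>. \<forall>B\<in>\<Omega>. d A B = d B A) \<and>
     (\<forall>A\<in>\<Omega>. \<forall>B\<in>\<Omega>. \<forall>C\<in>\<Omega>. d A C \<le> d A B + d B C)"

definition pm_rel :: "'a set \<Rightarrow> ('a \<Rightarrow> 'a \<Rightarrow> real) \<Rightarrow> ('a \<times> 'a) set" where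
  "pm_rel \<Omega> d = {(A, B). A \<in> \<Omega> \<and> B \<in> \<Omega> \<and> d A B = 0}"

text \<open>Fermat distance function: d_F(A_1..A_n) = min over B in Omega of sum_i d(A_i,B)
  (written as an infimum, which coincides with the minimum whenever it is attained).
  n-tuples are lists of length n.\<close>
definition fermat_dist :: "'a set \<Rightarrow> ('a \<Rightarrow> 'a \<Rightarrow> real) \<Rightarrow> 'a list \<Rightarrow> real" where
  "fermat_dist \<Omega> d As = Inf {(\<Sum>i<length As. d (As ! i) B) | B. B \<in> \<Omega>}"

definition fermat_quot :: "'a set \<Rightarrow> ('a \<Rightarrow> 'a \<Rightarrow> real) \<Rightarrow> 'a set list \<Rightarrow> real" where
  "fermat_quot \<Omega> d Xs = fermat_dist \<Omega> d (map (\<lambda>X. SOME A. A \<in> X) Xs)"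

definition n_metric :: "'b set \<Rightarrow> nat \<Rightarrow> ('b list \<Rightarrow> real) \<Rightarrow> bool" where
  "n_metric X n D \<longleftrightarrow>
    (\<forall>xs. set xs \<subseteq> X \<and> length xs = n \<longrightarrow>
       D xs \<ge> 0 \<and>
       (D xs = 0 \<longleftrightarrow> (\<forall>i<n. \<forall>j<n. xs ! i = xs ! j)) \<and>
       (\<forall>\<sigma>. \<sigma> permutes {..<n} \<longrightarrow> D xs = D (map (\<lambda>i. xs ! \<sigma> i) [0..<n])) \<and>
       (\<forall>y\<in>X. D xs \<le> (\<Sum>i<n. D (xs[i := y]))))"

end

theory Submission
  imports Defs
begin

definition Ssum :: "('a \<Rightarrow> 'a \<Rightarrow> real) \<Rightarrow> 'a list \<Rightarrow> 'a \<Rightarrow> real" where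
  "Ssum d As B = (\<Sum>i<length As. d (As ! i) B)"

lemma fd_alt: "fermat_dist \<Omega> d As = Inf ((Ssum d As) ` \<Omega>)"
proof -
  have "{(\<Sum>i<length As. d (As ! i) B) | B. B \<in> \<Omega>} = (Ssum d As) ` \<Omega>"
    unfolding Ssum_def by blast
  then show ?thesis unfolding fermat_dist_def by simp
qed

lemma pm_nn: "pseudometric_on \<Omega> d \<Longrightarrow> A \<in> \<Omega> \<Longrightarrow> B \<in> \<Omega> \<Longrightarrow> 0 \<le> d A B"
  unfolding pseudometric_on_def by blast
lemma pm_refl: "pseudometric_on \<Omega> d \<Longrightarrow> A \<in> \<Omega> \<Longrightarrow> d A A = 0"
  unfolding pseudometric_on_def by blast
lemma pm_sym: "pseudometric_on \<Omega> d \<Longrightarrow> A \<in> \<Omega> \<Longrightarrow> B \<in> \<Omega> \<Longrightarrow> d A B = d B A"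
  unfolding pseudometric_on_def by blast
lemma pm_tri: "pseudometric_on \<Omega> d \<Longrightarrow> A \<in> \<Omega> \<Longrightarrow> B \<in> \<Omega> \<Longrightarrow> C \<in> \<Omega> \<Longrightarrow> d A C \<le> d A B + d B C"
  unfolding pseudometric_on_def by blast

lemma Ssum_nn:
  assumes "pseudometric_on \<Omega> d" "set As \<subseteq> \<Omega>" "B \<in> \<Omega>"
  shows "0 \<le> Ssum d As B"
  unfolding Ssum_def
proof (rule sum_nonneg)
  fix i assume "i \<in> {..<length As}"
  then have "As ! i \<in> \<Omega>" using assms(2) nth_mem by blast
  then show "0 \<le> d (As ! i) B" by (rule pm_nn[OF assms(1) _ assms(3)])
qed

lemma sub_le_Ssum:
  assumes "pseudometric_on \<Omega> d" "set As \<subseteq> \<Omega>" "B \<in> \<Omega>" "K \<subseteq> {..<length As}"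
  shows "(\<Sum>k\<in>K. d (As ! k) B) \<le> Ssum d As B"
  unfolding Ssum_def
proof (rule sum_mono2)
  fix i assume "i \<in> {..<length As} - K"
  then have "As ! i \<in> \<Omega>" using assms(2) nth_mem by blast
  then show "0 \<le> d (As ! i) B" by (rule pm_nn[OF assms(1) _ assms(3)])
qed (use assms(4) in auto)

lemma term_le_Ssum:
  assumes "pseudometric_on \<Omega> d" "set As \<subseteq> \<Omega>" "B \<in> \<Omega>" "i < length As"
  shows "d (As ! i) B \<le> Ssum d As B"
proof -
  have "{i} \<subseteq> {..<length As}" using assms(4) by simp
  from sub_le_Ssum[OF assms(1-3) this] show ?thesis by simp
qed

lemma two_le_Ssum:
  assumes "pseudometric_on \<Omega> d" "set As \<subseteq> \<Omega>" "B \<in> \<Omega>" "1 < length As"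
  shows "d (As ! 0) B + d (As ! 1) B \<le> Ssum d As B"
proof -
  have "{0,1} \<subseteq> {..<length As}" using assms(4) by auto
  from sub_le_Ssum[OF assms(1-3) this] show ?thesis by simp
qed

lemma fd_le:
  assumes "pseudometric_on \<Omega> d" "set As \<subseteq> \<Omega>" "B \<in> \<Omega>"
  shows "fermat_dist \<Omega> d As \<le> Ssum d As B"
  unfolding fd_alt
  by (rule cInf_lower) (use assms Ssum_nn in \<open>auto intro!: bdd_belowI2\<close>)

lemma fd_ge:
  assumes "\<Omega> \<noteq> {}" "\<And>B. B \<in> \<Omega> \<Longrightarrow> c \<le> Ssum d As B"
  shows "c \<le> fermat_dist \<Omega> d As"
  unfolding fd_alt
  by (rule cInf_greatest) (use assms in auto)

lemma fd_nn:
  assumes "pseudometric_on \<Omega> d" "set As \<subseteq> \<Omega>" "\<Omega> \<noteq> {}"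
  shows "0 \<le> fermat_dist \<Omega> d As"
  using fd_ge[OF assms(3)] Ssum_nn[OF assms(1,2)] by blast

lemma d_cong:
  assumes "pseudometric_on \<Omega> d" "A \<in> \<Omega>" "A' \<in> \<Omega>" "B \<in> \<Omega>" "d A A' = 0"
  shows "d A B = d A' B"
proof -
  have "d A B \<le> d A A' + d A' B" "d A' B \<le> d A' A + d A B" "d A' A = d A A'"
    using pm_tri[OF assms(1)] pm_sym[OF assms(1)] assms(2-4) by blast+
  then show ?thesis using assms(5) by linarith
qed

lemma fd_cong:
  assumes "pseudometric_on \<Omega> d" "set As \<subseteq> \<Omega>" "set Bs \<subseteq> \<Omega>" "length As = length Bs"
    "\<And>i. i < length As \<Longrightarrow> d (As ! i) (Bs ! i) = 0"
  shows "fermat_dist \<Omega> d As = fermat_dist \<Omega> d Bs"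
proof -
  have "Ssum d As B = Ssum d Bs B" if "B \<in> \<Omega>" for B
    unfolding Ssum_def using assms that
    by (intro sum.cong) (auto intro!: d_cong[OF assms(1)] simp: subset_iff)
  then have "(Ssum d As) ` \<Omega> = (Ssum d Bs) ` \<Omega>" by auto
  then show ?thesis unfolding fd_alt by simp
qed

lemma fd_perm:
  assumes "\<sigma> permutes {..<length xs}"
  shows "fermat_dist \<Omega> d (map (\<lambda>i. xs ! \<sigma> i) [0..<length xs]) = fermat_dist \<Omega> d xs"
proof -
  have "Ssum d (map (\<lambda>i. xs ! \<sigma> i) [0..<length xs]) B = Ssum d xs B" for B
  proof -
    have "Ssum d (map (\<lambda>i. xs ! \<sigma> i) [0..<length xs]) B = (\<Sum>i<length xs. d (xs ! \<sigma> i) B)"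
      unfolding Ssum_def by (intro sum.cong) auto
    also have "\<dots> = Ssum d xs B" unfolding Ssum_def
      using sum.permute[OF assms, of "\<lambda>i. d (xs ! i) B"] by (simp add: comp_def)
    finally show ?thesis .
  qed
  then show ?thesis unfolding fd_alt by simp
qed

lemma fd_zero:
  assumes "pseudometric_on \<Omega> d" "set As \<subseteq> \<Omega>" "As \<noteq> []"
  shows "fermat_dist \<Omega> d As = 0 \<longleftrightarrow> (\<forall>i<length As. \<forall>j<length As. d (As ! i) (As ! j) = 0)"
proof
  have ne: "\<Omega> \<noteq> {}" using assms by auto
  assume z: "fermat_dist \<Omega> d As = 0"
  show "\<forall>i<length As. \<forall>j<length As. d (As ! i) (As ! j) = 0"
  proof (intro allI impI)
    fix i j assume ij: "i < length As" "j < length As"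
    have inO: "As ! i \<in> \<Omega>" "As ! j \<in> \<Omega>" using ij assms nth_mem by blast+
    have "d (As ! i) (As ! j) / 2 \<le> fermat_dist \<Omega> d As"
    proof (rule fd_ge[OF ne])
      fix B assume B: "B \<in> \<Omega>"
      have "d (As ! i) (As ! j) \<le> d (As ! i) B + d B (As ! j)" "d B (As ! j) = d (As ! j) B"
        using assms(1) inO B unfolding pseudometric_on_def by blast+
      moreover have "d (As ! i) B \<le> Ssum d As B" "d (As ! j) B \<le> Ssum d As B"
        using term_le_Ssum[OF assms(1,2) B] ij by auto
      ultimately show "d (As ! i) (As ! j) / 2 \<le> Ssum d As B" by linarith
    qed
    moreover have "0 \<le> d (As ! i) (As ! j)" using assms(1) inO unfolding pseudometric_on_def by blast
    ultimately show "d (As ! i) (As ! j) = 0" using z by linarith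
  qed
next
  assume a: "\<forall>i<length As. \<forall>j<length As. d (As ! i) (As ! j) = 0"
  have A0: "As ! 0 \<in> \<Omega>" using assms by (metis length_greater_0_conv nth_mem subsetD)
  have "Ssum d As (As ! 0) = 0" unfolding Ssum_def using a assms(3) by (intro sum.neutral) auto
  then have "fermat_dist \<Omega> d As \<le> 0" using fd_le[OF assms(1,2) A0] by simp
  moreover have "0 \<le> fermat_dist \<Omega> d As" using fd_nn[OF assms(1,2)] A0 by blast
  ultimately show "fermat_dist \<Omega> d As = 0" by simp
qed

lemma Ssum_upd:
  assumes "i < length As"
  shows "Ssum d As B = Ssum d (As[i := y]) B + d (As ! i) B - d y B"
proof -
  have "Ssum d As B = d (As ! i) B + (\<Sum>k\<in>{..<length As} - {i}. d (As ! k) B)"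
    unfolding Ssum_def using assms by (subst sum.remove[of _ i]) auto
  moreover have "Ssum d (As[i := y]) B = d y B + (\<Sum>k\<in>{..<length As} - {i}. d (As[i := y] ! k) B)"
    unfolding Ssum_def using assms by (subst sum.remove[of _ i]) auto
  moreover have "(\<Sum>k\<in>{..<length As} - {i}. d (As[i := y] ! k) B) = (\<Sum>k\<in>{..<length As} - {i}. d (As ! k) B)"
    by (intro sum.cong) auto
  ultimately show ?thesis by linarith
qed

lemma fd_simplex:
  assumes "pseudometric_on \<Omega> d" "set As \<subseteq> \<Omega>" "1 < length As" "y \<in> \<Omega>"
  shows "fermat_dist \<Omega> d As \<le> (\<Sum>i<length As. fermat_dist \<Omega> d (As[i := y]))"
proof -
  have ne: "\<Omega> \<noteq> {}" using assms by auto
  have set_upd: "set (As[i := y]) \<subseteq> \<Omega>" for i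
    using assms(2,4) set_update_subset_insert by (metis insert_subset subset_trans)
  have A0: "As ! 0 \<in> \<Omega>" using assms by (metis less_trans zero_less_one nth_mem subsetD)
  have h1: "d (As ! 0) y \<le> fermat_dist \<Omega> d (As[1 := y])"
  proof (rule fd_ge[OF ne])
    fix B assume B: "B \<in> \<Omega>"
    have "d (As ! 0) y \<le> d (As ! 0) B + d B y" "d B y = d y B"
      using assms(1) A0 B assms(4) unfolding pseudometric_on_def by blast+
    moreover have "d (As[1 := y] ! 0) B + d (As[1 := y] ! 1) B \<le> Ssum d (As[1 := y]) B"
      using two_le_Ssum[OF assms(1) set_upd[of 1] B] assms(3) by simp
    ultimately show "d (As ! 0) y \<le> Ssum d (As[1 := y]) B" using assms(3) by simp
  qed
  have h0: "fermat_dist \<Omega> d As - d (As ! 0) y \<le> fermat_dist \<Omega> d (As[0 := y])"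
  proof (rule fd_ge[OF ne])
    fix B assume B: "B \<in> \<Omega>"
    have "d (As ! 0) B \<le> d (As ! 0) y + d y B"
      using assms(1) A0 B assms(4) unfolding pseudometric_on_def by blast
    moreover have "Ssum d As B = Ssum d (As[0 := y]) B + d (As ! 0) B - d y B"
      by (rule Ssum_upd) (use assms(3) in linarith)
    moreover have "fermat_dist \<Omega> d As \<le> Ssum d As B" using fd_le[OF assms(1,2) B] .
    ultimately show "fermat_dist \<Omega> d As - d (As ! 0) y \<le> Ssum d (As[0 := y]) B" by linarith
  qed
  have "fermat_dist \<Omega> d (As[0 := y]) + fermat_dist \<Omega> d (As[1 := y])
        = (\<Sum>i\<in>{0,1}. fermat_dist \<Omega> d (As[i := y]))" by simp
  also have "\<dots> \<le> (\<Sum>i<length As. fermat_dist \<Omega> d (As[i := y]))"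
    using assms(3) fd_nn[OF assms(1) set_upd ne] by (intro sum_mono2) auto
  finally show ?thesis using h0 h1 by linarith
qed

lemma equiv_pm:
  assumes "pseudometric_on \<Omega> d"
  shows "equiv \<Omega> (pm_rel \<Omega> d)"
proof -
  have "trans (pm_rel \<Omega> d)"
  proof (rule transI)
    fix a b c assume "(a, b) \<in> pm_rel \<Omega> d" "(b, c) \<in> pm_rel \<Omega> d"
    then have h: "a \<in> \<Omega>" "b \<in> \<Omega>" "c \<in> \<Omega>" "d a b = 0" "d b c = 0" unfolding pm_rel_def by simp_all
    have "d a c \<le> d a b + d b c" by (rule pm_tri[OF assms h(1-3)])
    moreover have "0 \<le> d a c" by (rule pm_nn[OF assms h(1,3)])
    ultimately have "d a c = 0" using h(4,5) by linarith
    then show "(a, c) \<in> pm_rel \<Omega> d" using h unfolding pm_rel_def by simp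
  qed
  moreover have "sym (pm_rel \<Omega> d)"
  proof (rule symI)
    fix a b assume "(a, b) \<in> pm_rel \<Omega> d"
    then have ab: "a \<in> \<Omega>" "b \<in> \<Omega>" "d a b = 0" unfolding pm_rel_def by simp_all
    have "d b a = d a b" by (rule pm_sym[OF assms ab(2,1)])
    then show "(b, a) \<in> pm_rel \<Omega> d" using ab unfolding pm_rel_def by simp
  qed
  moreover have "refl_on \<Omega> (pm_rel \<Omega> d)"
  proof (rule refl_onI)
    fix a assume a: "a \<in> \<Omega>"
    have "d a a = 0" by (rule pm_refl[OF assms a])
    then show "(a, a) \<in> pm_rel \<Omega> d" using a unfolding pm_rel_def by simp
  qed
  moreover have "pm_rel \<Omega> d \<subseteq> \<Omega> \<times> \<Omega>" unfolding pm_rel_def by blast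
  ultimately show ?thesis unfolding equiv_def by blast
qed

lemma class_rep:
  assumes "pseudometric_on \<Omega> d" "a \<in> \<Omega>"
  shows "(SOME A. A \<in> pm_rel \<Omega> d `` {a}) \<in> \<Omega> \<and> d a (SOME A. A \<in> pm_rel \<Omega> d `` {a}) = 0"
proof -
  have "d a a = 0" by (rule pm_refl[OF assms])
  then have "a \<in> pm_rel \<Omega> d `` {a}" using assms(2) unfolding pm_rel_def by simp
  then have "(SOME A. A \<in> pm_rel \<Omega> d `` {a}) \<in> pm_rel \<Omega> d `` {a}" by (rule someI)
  then show ?thesis unfolding pm_rel_def by auto
qed

lemma quot_rep:
  assumes "pseudometric_on \<Omega> d" "X \<in> \<Omega> // pm_rel \<Omega> d"
  shows "(SOME A. A \<in> X) \<in> \<Omega> \<and> X = pm_rel \<Omega> d `` {SOME A. A \<in> X}"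
proof -
  obtain a where a: "a \<in> \<Omega>" "X = pm_rel \<Omega> d `` {a}" using assms(2) by (auto elim: quotientE)
  have z: "d a a = 0" by (rule pm_refl[OF assms(1) a(1)])
  have mem: "x \<in> X \<longleftrightarrow> (a, x) \<in> pm_rel \<Omega> d" for x using a(2) by blast
  have "(a, a) \<in> pm_rel \<Omega> d" using a(1) z unfolding pm_rel_def by blast
  then have "a \<in> X" using mem by blast
  then have r: "(SOME A. A \<in> X) \<in> X" by (rule someI)
  then have ar: "(a, SOME A. A \<in> X) \<in> pm_rel \<Omega> d" using mem by blast
  then have m: "(SOME A. A \<in> X) \<in> \<Omega>" unfolding pm_rel_def by blast
  have e: "pm_rel \<Omega> d `` {a} = pm_rel \<Omega> d `` {SOME A. A \<in> X}"
    by (rule equiv_class_eq[OF equiv_pm[OF assms(1)] ar])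
  have "X = pm_rel \<Omega> d `` {SOME A. A \<in> X}" using a(2) e by (rule trans)
  then show ?thesis using m by (rule conjI[rotated])
qed

theorem theorem3:
  fixes \<Omega> :: "(real^'m^'m) set"
    and d :: "real^'m^'m \<Rightarrow> real^'m^'m \<Rightarrow> real"
    and n :: nat
  assumes "pseudometric_on \<Omega> d"
    and "n \<ge> 2"
  shows "(\<forall>As. set As \<subseteq> \<Omega> \<and> length As = n \<longrightarrow>
            fermat_quot \<Omega> d (map (\<lambda>A. pm_rel \<Omega> d `` {A}) As) = fermat_dist \<Omega> d As)
         \<and> n_metric (\<Omega> // pm_rel \<Omega> d) n (fermat_quot \<Omega> d)"

proof
  let ?R = "pm_rel \<Omega> d"
  let ?rep = "\<lambda>X. SOME A. A \<in> X"
  show "\<forall>As. set As \<subseteq> \<Omega> \<and> length As = n \<longrightarrow>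
            fermat_quot \<Omega> d (map (\<lambda>A. ?R `` {A}) As) = fermat_dist \<Omega> d As"
  proof (intro allI impI)
    fix As :: "(real^'m^'m) list" assume As: "set As \<subseteq> \<Omega> \<and> length As = n"
    have "fermat_dist \<Omega> d As = fermat_dist \<Omega> d (map ?rep (map (\<lambda>A. ?R `` {A}) As))"
      using As class_rep[OF assms(1)]
      by (intro fd_cong[OF assms(1)]) (auto simp: subset_iff)
    then show "fermat_quot \<Omega> d (map (\<lambda>A. ?R `` {A}) As) = fermat_dist \<Omega> d As"
      unfolding fermat_quot_def by simp
  qed
next
  let ?R = "pm_rel \<Omega> d"
  let ?rep = "\<lambda>X. SOME A. A \<in> X"
  have eqv: "equiv \<Omega> ?R" by (rule equiv_pm[OF assms(1)])
  show "n_metric (\<Omega> // ?R) n (fermat_quot \<Omega> d)"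
    unfolding n_metric_def
  proof (intro allI impI conjI)
    fix xs assume xs: "set xs \<subseteq> \<Omega> // ?R \<and> length xs = n"
    define as where "as = map ?rep xs"
    have fq: "fermat_quot \<Omega> d ys = fermat_dist \<Omega> d (map ?rep ys)" for ys
      unfolding fermat_quot_def by simp
    have ras: "?rep X \<in> \<Omega> \<and> X = ?R `` {?rep X}" if "X \<in> set xs" for X
      using quot_rep[OF assms(1), of X] xs that by blast
    have rin: "\<forall>X\<in>set xs. ?rep X \<in> \<Omega>" using ras by blast
    have las: "set as \<subseteq> \<Omega>" "length as = n" unfolding as_def using rin xs
      by (simp_all only: set_map length_map) blast+
    have "as ! 0 \<in> set as" using las(2) assms(2) by auto
    then have ne: "\<Omega> \<noteq> {}" using las(1) by blast
    show "0 \<le> fermat_quot \<Omega> d xs" unfolding fq as_def[symmetric] using fd_nn[OF assms(1) las(1) ne] .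
    have ne_as: "as \<noteq> []" using las(2) assms(2) by (cases as) auto
    have eqiff: "xs ! i = xs ! j \<longleftrightarrow> d (as ! i) (as ! j) = 0" if "i < n" "j < n" for i j
    proof -
      have ri: "?rep (xs ! i) \<in> \<Omega> \<and> xs ! i = ?R `` {?rep (xs ! i)}"
        using that xs by (intro ras) simp
      have rj: "?rep (xs ! j) \<in> \<Omega> \<and> xs ! j = ?R `` {?rep (xs ! j)}"
        using that xs by (intro ras) simp
      have ai: "as ! i = ?rep (xs ! i)" "as ! j = ?rep (xs ! j)" unfolding as_def using that xs by simp_all
      have c: "xs ! i = ?R `` {as ! i}" "xs ! j = ?R `` {as ! j}" "as ! i \<in> \<Omega>" "as ! j \<in> \<Omega>"
        using ri rj unfolding ai[symmetric] by blast+
      have "xs ! i = xs ! j \<longleftrightarrow> ?R `` {as ! i} = ?R `` {as ! j}" using c(1,2) by argo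
      also have "\<dots> \<longleftrightarrow> (as ! i, as ! j) \<in> ?R" by (rule eq_equiv_class_iff[OF eqv c(3,4)])
      also have "\<dots> \<longleftrightarrow> d (as ! i) (as ! j) = 0" using c(3,4) unfolding pm_rel_def by blast
      finally show ?thesis .
    qed
    show "fermat_quot \<Omega> d xs = 0 \<longleftrightarrow> (\<forall>i<n. \<forall>j<n. xs ! i = xs ! j)"
      unfolding fq as_def[symmetric] fd_zero[OF assms(1) las(1) ne_as] las(2)[symmetric] using eqiff las(2)
      by metis
    show "fermat_quot \<Omega> d xs = fermat_quot \<Omega> d (map (\<lambda>i. xs ! \<sigma> i) [0..<n])"
      if s: "\<sigma> permutes {..<n}" for \<sigma>
    proof -
      have "map ?rep (map (\<lambda>i. xs ! \<sigma> i) [0..<n]) = map (\<lambda>i. as ! \<sigma> i) [0..<length as]"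
        using las(2) xs permutes_in_image[OF s] unfolding as_def by auto
      moreover have "fermat_dist \<Omega> d (map (\<lambda>i. as ! \<sigma> i) [0..<length as]) = fermat_dist \<Omega> d as"
        by (rule fd_perm) (use s las(2) in simp)
      ultimately show "fermat_quot \<Omega> d xs = fermat_quot \<Omega> d (map (\<lambda>i. xs ! \<sigma> i) [0..<n])"
        unfolding fq as_def[symmetric] by (simp only:)
    qed
    show "\<forall>y\<in>\<Omega> // ?R. fermat_quot \<Omega> d xs \<le> (\<Sum>i<n. fermat_quot \<Omega> d (xs[i := y]))"
    proof
      fix y assume y: "y \<in> \<Omega> // ?R"
      have yr: "?rep y \<in> \<Omega>" using quot_rep[OF assms(1) y] by blast
      have "map ?rep (xs[i := y]) = as[i := ?rep y]" for i unfolding as_def by (simp add: map_update)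
      then show "fermat_quot \<Omega> d xs \<le> (\<Sum>i<n. fermat_quot \<Omega> d (xs[i := y]))"
        unfolding fq as_def[symmetric] using fd_simplex[OF assms(1) las(1) _ yr] las(2) assms(2) by simp
    qed
  qed
qed

end
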